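(* Let $R$ be a ring. If $Q_l(R)$ is a left artinian ring, then $S_0(R)=\mathcal C_R$ (in particular $\mathcal C_R$ is a left Ore set) and $Q_{cl}(R)=Q_l(R)$.
   Context: Rings are associative with $1$. $\mathcal C_R$ is the set of regular elements of $R$. A multiplicatively closed subset $S$ ($1\in S$, $0\notin S$) is a left Ore set if $Sr\cap Rs\ne\emptyset$ for all $r\in R,s\in S$, and a left denominator set if moreover $rs=0$ ($s\in S$) implies $tr=0$ for some $t\in S$. $S_0(R)$ is the largest left denominator set of $R$ contained in $\mathcal C_R$ (it exists), $Q_l(R):=S_0(R)^{-1}R$, and $Q_{cl}(R):=\mathcal C_R^{-1}R$ is the classical left quotient ring. *)

theory Defs
  imports Main
begin

text \<open>Rings are type-class rings (associative, with 1). Left Ore localisation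
is described by its standard defining (universal) properties.\<close>

definition regular_elems :: "'a::ring_1 set" where
  "regular_elems = {c. (\<forall>r. c * r = 0 \<longrightarrow> r = 0) \<and> (\<forall>r. r * c = 0 \<longrightarrow> r = 0)}"

definition mult_closed :: "'a::ring_1 set \<Rightarrow> bool" where
  "mult_closed S \<longleftrightarrow> 1 \<in> S \<and> 0 \<notin> S \<and> (\<forall>s\<in>S. \<forall>t\<in>S. s * t \<in> S)"

definition left_ore_set :: "'a::ring_1 set \<Rightarrow> bool" where
  "left_ore_set S \<longleftrightarrow> mult_closed S \<and>
     (\<forall>r s. s \<in> S \<longrightarrow> (\<exists>s'\<in>S. \<exists>r'. s' * r = r' * s))"

definition left_denominator_set :: "'a::ring_1 set \<Rightarrow> bool" where
  "left_denominator_set S \<longleftrightarrow> left_ore_set S \<and>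
     (\<forall>r s. s \<in> S \<longrightarrow> r * s = 0 \<longrightarrow> (\<exists>t\<in>S. t * r = 0))"

definition is_S0 :: "'a::ring_1 set \<Rightarrow> bool" where
  "is_S0 S \<longleftrightarrow> left_denominator_set S \<and> S \<subseteq> regular_elems \<and>
     (\<forall>T. left_denominator_set T \<and> T \<subseteq> regular_elems \<longrightarrow> T \<subseteq> S)"

definition ring_hom1 :: "('a::ring_1 \<Rightarrow> 'b::ring_1) \<Rightarrow> bool" where
  "ring_hom1 f \<longleftrightarrow> f 1 = 1 \<and> (\<forall>x y. f (x + y) = f x + f y) \<and> (\<forall>x y. f (x * y) = f x * f y)"

definition is_left_localization :: "'a::ring_1 set \<Rightarrow> ('a \<Rightarrow> 'b::ring_1) \<Rightarrow> bool" where
  "is_left_localization S \<sigma> \<longleftrightarrow> ring_hom1 \<sigma> \<and>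
     (\<forall>s\<in>S. \<exists>u. u * \<sigma> s = 1 \<and> \<sigma> s * u = 1) \<and>
     (\<forall>q. \<exists>s\<in>S. \<exists>r u. u * \<sigma> s = 1 \<and> \<sigma> s * u = 1 \<and> q = u * \<sigma> r) \<and>
     (\<forall>r. \<sigma> r = 0 \<longleftrightarrow> (\<exists>s\<in>S. s * r = 0))"

definition left_ideal :: "'b::ring_1 set \<Rightarrow> bool" where
  "left_ideal I \<longleftrightarrow> 0 \<in> I \<and> (\<forall>x\<in>I. \<forall>y\<in>I. x - y \<in> I) \<and> (\<forall>q. \<forall>x\<in>I. q * x \<in> I)"

definition left_artinian :: "'b::ring_1 itself \<Rightarrow> bool" where
  "left_artinian (_ :: 'b itself) \<longleftrightarrow>
     (\<forall>I :: nat \<Rightarrow> 'b set. (\<forall>n. left_ideal (I n)) \<and> (\<forall>n. I (Suc n) \<subseteq> I n) \<longrightarrow>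
        (\<exists>m. \<forall>n\<ge>m. I n = I m))"

end

theory Submission
  imports Defs
begin

lemma lreg_pow:
  fixes a :: "'b::ring_1"
  assumes "\<forall>q. q * a = 0 \<longrightarrow> q = 0"
  shows "q * a ^ n = 0 \<Longrightarrow> q = 0"
proof (induction n arbitrary: q)
  case 0 then show ?case by simp
next
  case (Suc n)
  have "(q * a) * a ^ n = 0" using Suc.prems by (simp add: mult.assoc)
  then have "q * a = 0" using Suc.IH by blast
  then show ?case using assms by blast
qed

lemma artinian_left_inv:
  fixes a :: "'b::ring_1"
  assumes art: "left_artinian TYPE('b)" and reg: "\<forall>q. q * a = 0 \<longrightarrow> q = 0"
  shows "\<exists>x. x * a = 1"
proof -
  define I where "I = (\<lambda>n. {q * a ^ n | q. True})"
  have li: "\<forall>n. left_ideal (I n)"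
  proof
    fix n
    have "0 \<in> I n" unfolding I_def by (rule CollectI, rule exI[of _ 0], simp)
    moreover have "x - y \<in> I n" if xy: "x \<in> I n" "y \<in> I n" for x y
    proof -
      obtain q1 q2 where "x = q1 * a ^ n" "y = q2 * a ^ n" using xy unfolding I_def by blast
      then have "x - y = (q1 - q2) * a ^ n" by (simp add: left_diff_distrib)
      then show ?thesis unfolding I_def by blast
    qed
    moreover have "q * x \<in> I n" if xx: "x \<in> I n" for q x
    proof -
      obtain q1 where "x = q1 * a ^ n" using xx unfolding I_def by blast
      then have "q * x = (q * q1) * a ^ n" by (simp only: mult.assoc)
      then show ?thesis unfolding I_def by blast
    qed
    ultimately show "left_ideal (I n)" unfolding left_ideal_def by blast
  qed
  have dec: "\<forall>n. I (Suc n) \<subseteq> I n"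
  proof (intro allI subsetI)
    fix n x assume "x \<in> I (Suc n)"
    then obtain q where "x = q * a ^ Suc n" unfolding I_def by blast
    then have "x = (q * a) * a ^ n" by (simp only: power_Suc mult.assoc)
    then show "x \<in> I n" unfolding I_def by blast
  qed
  obtain m where m: "\<forall>n\<ge>m. I n = I m"
    using art li dec unfolding left_artinian_def by blast
  have "a ^ m = 1 * a ^ m" by simp
  then have "a ^ m \<in> I m" unfolding I_def by blast
  moreover have e: "I (Suc m) = I m" using spec[OF m, of "Suc m"] by simp
  ultimately have "a ^ m \<in> I (Suc m)" by simp
  then obtain x where "a ^ m = x * a ^ Suc m" unfolding I_def by blast
  then have "a ^ m = (x * a) * a ^ m" by (simp only: power_Suc mult.assoc)
  then have "(1 - x * a) * a ^ m = 0"
    by (simp add: left_diff_distrib)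
  then have "1 - x * a = 0" using lreg_pow[OF reg] by blast
  then show ?thesis by auto
qed

lemma artinian_unit:
  fixes a :: "'b::ring_1"
  assumes art: "left_artinian TYPE('b)" and reg: "\<forall>q. q * a = 0 \<longrightarrow> q = 0"
  shows "\<exists>x. x * a = 1 \<and> a * x = 1"
proof -
  obtain x where x: "x * a = 1" using artinian_left_inv[OF assms] by blast
  have "\<forall>q. q * x = 0 \<longrightarrow> q = 0"
  proof (intro allI impI)
    fix q assume "q * x = 0"
    then have "q * x * a = 0" by simp
    then show "q = 0" using x by (simp add: mult.assoc)
  qed
  then obtain y where y: "y * x = 1" using artinian_left_inv[OF art] by blast
  have "y = y * x * a" using x by (simp add: mult.assoc)
  also have "\<dots> = a" using y by simp
  finally show ?thesis using x y by auto
qed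

theorem corollary2p10:
  fixes S0 :: "'a::ring_1 set" and \<sigma> :: "'a \<Rightarrow> 'b::ring_1"
  assumes "is_S0 S0"
    and "is_left_localization S0 \<sigma>"
    and "left_artinian TYPE('b)"
  shows "S0 = regular_elems \<and> left_ore_set (regular_elems :: 'a set)
         \<and> is_left_localization (regular_elems :: 'a set) \<sigma>"
proof -
  have S0: "left_denominator_set S0" "S0 \<subseteq> regular_elems"
    "\<And>T. left_denominator_set T \<Longrightarrow> T \<subseteq> regular_elems \<Longrightarrow> T \<subseteq> S0"
    using assms(1) unfolding is_S0_def by blast+
  have hom: "\<sigma> 1 = 1" "\<And>x y. \<sigma> (x + y) = \<sigma> x + \<sigma> y" "\<And>x y. \<sigma> (x * y) = \<sigma> x * \<sigma> y"
    using assms(2) unfolding is_left_localization_def ring_hom1_def by blast+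
  have s0: "\<sigma> 0 = 0" using hom(2)[of 0 0] by simp
  have sminus: "\<sigma> (x - y) = \<sigma> x - \<sigma> y" for x y
    using hom(2)[of "x - y" y] by (simp add: algebra_simps)
  have surj: "\<And>q. \<exists>s\<in>S0. \<exists>r u. u * \<sigma> s = 1 \<and> \<sigma> s * u = 1 \<and> q = u * \<sigma> r"
    and ker: "\<And>r. \<sigma> r = 0 \<longleftrightarrow> (\<exists>s\<in>S0. s * r = 0)"
    and inv: "\<forall>s\<in>S0. \<exists>u. u * \<sigma> s = 1 \<and> \<sigma> s * u = 1"
    using assms(2) unfolding is_left_localization_def by blast+
  have regI: "c \<in> regular_elems \<Longrightarrow> r * c = 0 \<Longrightarrow> r = 0" for c r :: 'a
    unfolding regular_elems_def by blast
  have unit: "\<exists>v. v * \<sigma> c = 1 \<and> \<sigma> c * v = 1" if c: "c \<in> regular_elems" for c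
  proof -
    have "\<forall>q. q * \<sigma> c = 0 \<longrightarrow> q = 0"
    proof (intro allI impI)
      fix q assume q: "q * \<sigma> c = 0"
      obtain s r u where s: "s \<in> S0" "u * \<sigma> s = 1" "\<sigma> s * u = 1" "q = u * \<sigma> r"
        using surj[of q] by blast
      have "\<sigma> s * q * \<sigma> c = 0" using q by (simp add: mult.assoc)
      then have "\<sigma> (r * c) = 0" using s by (simp add: hom(3) mult.assoc[symmetric])
      then obtain t where t: "t \<in> S0" "t * (r * c) = 0" using ker by blast
      then have "(t * r) * c = 0" by (simp add: mult.assoc)
      then have "t * r = 0" using regI[OF c] by blast
      then have "\<sigma> r = 0" using ker t(1) by blast
      then show "q = 0" using s by simp
    qed
    then show ?thesis using artinian_unit[OF assms(3)] by blast
  qed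
  have C_ds: "left_denominator_set (regular_elems :: 'a set)"
    unfolding left_denominator_set_def left_ore_set_def mult_closed_def
  proof (intro conjI allI impI ballI)
    show "(1::'a) \<in> regular_elems" unfolding regular_elems_def by simp
    show "(0::'a) \<notin> regular_elems"
    proof
      assume "(0::'a) \<in> regular_elems"
      then have "\<forall>r. (0::'a) * r = 0 \<longrightarrow> r = 0" unfolding regular_elems_def by blast
      then have "(1::'a) = 0" by simp
      then show False by simp
    qed
    show "s * t \<in> regular_elems" if "s \<in> regular_elems" "t \<in> regular_elems" for s t :: 'a
    proof -
      have sl: "\<And>r. s * r = 0 \<Longrightarrow> r = 0" and sr: "\<And>r. r * s = 0 \<Longrightarrow> r = 0"
        and tl: "\<And>r. t * r = 0 \<Longrightarrow> r = 0" and tr: "\<And>r. r * t = 0 \<Longrightarrow> r = 0"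
        using that unfolding regular_elems_def by blast+
      have "(s * t) * r = 0 \<Longrightarrow> r = 0" for r
      proof -
        assume "(s * t) * r = 0"
        then have "s * (t * r) = 0" by (simp add: mult.assoc)
        then show "r = 0" using sl tl by blast
      qed
      moreover have "r * (s * t) = 0 \<Longrightarrow> r = 0" for r
      proof -
        assume "r * (s * t) = 0"
        then have "(r * s) * t = 0" by (simp add: mult.assoc)
        then show "r = 0" using sr tr by blast
      qed
      ultimately show ?thesis unfolding regular_elems_def by blast
    qed
    show "\<exists>t\<in>regular_elems. t * r = 0" if "c \<in> regular_elems" "r * c = 0" for r c :: 'a
      using that regI \<open>(1::'a) \<in> regular_elems\<close> by (metis mult_1)
    show "\<exists>s'\<in>regular_elems. \<exists>r'. s' * r = r' * c" if c: "c \<in> regular_elems" for r c :: 'a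
    proof -
      obtain v where v: "v * \<sigma> c = 1" "\<sigma> c * v = 1" using unit[OF c] by blast
      obtain s a u where s: "s \<in> S0" "u * \<sigma> s = 1" "\<sigma> s * u = 1" "\<sigma> r * v = u * \<sigma> a"
        using surj[of "\<sigma> r * v"] by blast
      have "\<sigma> s * \<sigma> r = \<sigma> s * \<sigma> r * (v * \<sigma> c)" using v(1) by simp
      also have "\<dots> = \<sigma> s * (\<sigma> r * v) * \<sigma> c" by (simp only: mult.assoc)
      also have "\<dots> = \<sigma> s * (u * \<sigma> a) * \<sigma> c" using s(4) by simp
      also have "\<dots> = (\<sigma> s * u) * \<sigma> a * \<sigma> c" by (simp only: mult.assoc)
      also have "\<dots> = \<sigma> a * \<sigma> c" using s(3) by simp
      finally have "\<sigma> s * \<sigma> r = \<sigma> a * \<sigma> c" .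
      then have "\<sigma> (s * r - a * c) = 0" by (simp add: sminus hom(3))
      then obtain t where t: "t \<in> S0" "t * (s * r - a * c) = 0" using ker by blast
      then have "(t * s) * r = (t * a) * c" by (simp add: algebra_simps)
      moreover have "t * s \<in> S0" using S0(1) t(1) s(1)
        unfolding left_denominator_set_def left_ore_set_def mult_closed_def by blast
      ultimately show ?thesis using S0(2) by blast
    qed
  qed
  have eq: "S0 = regular_elems" using S0(2) S0(3)[OF C_ds] by blast
  have "left_ore_set (regular_elems :: 'a set)" using C_ds unfolding left_denominator_set_def by blast
  moreover have "is_left_localization (regular_elems :: 'a set) \<sigma>" using eq assms(2) by (rule subst)
  ultimately show ?thesis using eq by (intro conjI)
qed

end
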